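(* Let $\phi:[0,1]\to[0,1]$ be a nondecreasing continuous function such that $\phi(x)>x$ for all $x\in(0,1)$, and let $V_\phi$ be the operator on $L_2[0,1]$ given by $(V_\phi f)(x)=\int_0^{\phi(x)}f(t)\,dt$. Then $V_\phi$ has no negative real eigenvalues, i.e. $\sigma_p(V_\phi)\cap(-\infty,0)=\emptyset$.
   Context: $\sigma_p(V_\phi)$ denotes the point spectrum of $V_\phi$. *)

theory Defs
  imports "HOL-Analysis.Analysis"
begin

definition L2_01 :: "(real \<Rightarrow> complex) set" where
  "L2_01 = {f. set_borel_measurable lborel {0..1} f \<and>
               set_integrable lborel {0..1} (\<lambda>x. (norm (f x))^2)}"

definition V_op :: "(real \<Rightarrow> real) \<Rightarrow> (real \<Rightarrow> complex) \<Rightarrow> real \<Rightarrow> complex" where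
  "V_op \<phi> f x = (LINT t:{0..\<phi> x}|lborel. f t)"

definition point_spectrum :: "(real \<Rightarrow> real) \<Rightarrow> complex set" where
  "point_spectrum \<phi> = {\<mu>. \<exists>f \<in> L2_01.
      \<not> (AE x in lborel. x \<in> {0..1} \<longrightarrow> f x = 0) \<and>
      (AE x in lborel. x \<in> {0..1} \<longrightarrow> V_op \<phi> f x = \<mu> * f x)}"

end

theory Submission
  imports Defs
begin

lemma mvt_le:
  fixes D :: "real \<Rightarrow> real"
  assumes "a < b" "continuous_on {a..b} D"
    and "\<And>x. a < x \<Longrightarrow> x < b \<Longrightarrow> (D has_real_derivative D' x) (at x)"
  shows "\<exists>z. a < z \<and> z < b \<and> D b - D a = (b - a) * D' z"
proof -
  obtain l z where z: "a < z" "z < b" "(D has_real_derivative l) (at z)" "D b - D a = (b - a) * l"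
    using MVT[OF assms(1,2)] assms(3) real_differentiable_def by meson
  have "l = D' z" using DERIV_unique[OF z(3) assms(3)[OF z(1,2)]] .
  thus ?thesis using z by blast
qed

lemma real_ode_zero_end:
  fixes R :: "real \<Rightarrow> real" and c :: real
  assumes c: "c > 0"
    and phi01: "\<forall>x\<in>{0<..<1}. \<phi> x \<le> 1"
    and phix: "\<forall>x\<in>{0<..<1}. \<phi> x > x"
    and cont: "continuous_on {0..1} R"
    and R0: "R 0 = 0"
    and der: "\<And>x. 0 < x \<Longrightarrow> x < 1 \<Longrightarrow> (R has_real_derivative (- c * R (\<phi> x))) (at x)"
  shows "R 1 \<le> 0"
proof (rule ccontr)
  assume pos: "\<not> R 1 \<le> 0"
  define Z where "Z = {x\<in>{0..1}. R x \<le> 0}"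
  have "Z = {0..1} \<inter> R -` {..0}" unfolding Z_def by auto
  hence "closed Z" using continuous_closed_preimage[OF cont] closed_atMost
    by (metis closed_atLeastAtMost closed_Int continuous_on_closed_vimage)
  have "compact Z"
    using \<open>closed Z\<close> unfolding compact_eq_bounded_closed
    by (metis (no_types, lifting) Z_def bounded_closed_interval bounded_subset mem_Collect_eq subsetI)
  moreover have "Z \<noteq> {}" proof - have "(0::real) \<in> Z" using R0 unfolding Z_def by auto thus ?thesis by blast qed
  ultimately obtain x0 where x0: "x0 \<in> Z" "\<forall>y\<in>Z. y \<le> x0"
    using compact_attains_sup by blast
  have x01: "0 \<le> x0" "x0 < 1" using x0 pos unfolding Z_def by (auto simp: less_le)
  have Rpos: "R y > 0" if "x0 < y" "y \<le> 1" for y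
  proof (rule ccontr)
    assume "\<not> R y > 0"
    hence "y \<in> Z" using that x01 unfolding Z_def by auto
    thus False using x0(2) that by force
  qed
  obtain z where z: "x0 < z" "z < 1" "R 1 - R x0 = (1 - x0) * (- c * R (\<phi> z))"
  proof -
    have "continuous_on {x0..1} R" using cont x01 by (auto intro: continuous_on_subset)
    moreover have "\<And>x. x0 < x \<Longrightarrow> x < 1 \<Longrightarrow> (R has_real_derivative (- c * R (\<phi> x))) (at x)"
      using der x01 by (metis le_less_trans)
    ultimately show ?thesis using mvt_le[of x0 1 R "\<lambda>x. - c * R (\<phi> x)"] x01 that by blast
  qed
  have zz: "z \<in> {0<..<1}" using z x01 by auto
  have "R (\<phi> z) > 0" using Rpos[of "\<phi> z"] phix phi01 zz z(1) by fastforce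
  hence "R 1 - R x0 < 0" using z(3) x01 c by (simp add: mult_pos_pos)
  moreover have "R x0 \<le> 0" using x0 unfolding Z_def by auto
  ultimately show False using pos by linarith
qed

lemma one_side:
  fixes R :: "real \<Rightarrow> real" and c W :: real
  assumes c: "c > 0"
    and phi01: "\<forall>x\<in>{0<..<1}. \<phi> x \<le> 1"
    and phix: "\<forall>x\<in>{0<..<1}. \<phi> x > x"
    and cont: "continuous_on {0..1} R"
    and R1: "R 1 = 0"
    and der: "\<And>x. 0 < x \<Longrightarrow> x < 1 \<Longrightarrow> (R has_real_derivative (- c * R (\<phi> x))) (at x)"
    and W: "\<forall>y\<in>{0..1}. \<bar>R y\<bar> * exp (2*c*y) \<le> W"
    and x: "0 \<le> x" "x < 1"
  shows "R x \<le> W/2 * exp (-2*c*x)"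
proof -
  define D where "D t = W/2 * (exp (-2*c*t) - exp (-2*c)) - R t" for t
  define D' where "D' t = - c * W * exp (-2*c*t) + c * R (\<phi> t)" for t
  have contD: "continuous_on {x..1} D"
    unfolding D_def using cont x
    by (auto intro!: continuous_intros intro: continuous_on_subset)
  have derD: "(D has_real_derivative D' t) (at t)" if "x < t" "t < 1" for t
  proof -
    have "(R has_real_derivative (- c * R (\<phi> t))) (at t)" using der that x by simp
    hence "(D has_real_derivative (W/2 * (exp (-2*c*t) * (-2*c) - 0) - (- c * R (\<phi> t)))) (at t)"
      unfolding D_def by (auto intro!: derivative_eq_intros)
    thus ?thesis unfolding D'_def by (simp add: algebra_simps)
  qed
  obtain z where z: "x < z" "z < 1" "D 1 - D x = (1 - x) * D' z"
    using mvt_le[of x 1 D D'] x contD derD by blast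
  have zz: "z \<in> {0<..<1}" using z x by auto
  have pz: "\<phi> z \<in> {0..1}" "\<phi> z \<ge> z" using phi01 phix zz by (auto simp: less_imp_le) (smt (verit) greaterThanLessThan_iff)
  have "\<bar>R (\<phi> z)\<bar> * exp (2*c*\<phi> z) \<le> W" using W pz by blast
  hence "R (\<phi> z) \<le> W * exp (-2*c*\<phi> z)"
  proof -
    have "R (\<phi> z) * exp (2*c*\<phi> z) \<le> W"
      by (meson \<open>\<bar>R (\<phi> z)\<bar> * exp (2*c*\<phi> z) \<le> W\<close> abs_ge_self exp_ge_zero mult_right_mono order_trans)
    hence "R (\<phi> z) * exp (2*c*\<phi> z) * exp (-2*c*\<phi> z) \<le> W * exp (-2*c*\<phi> z)"
      by (simp add: mult_right_mono)
    thus ?thesis by (simp add: mult.assoc flip: exp_add)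
  qed
  also have "\<dots> \<le> W * exp (-2*c*z)"
  proof -
    have "W \<ge> 0" using W pz by (smt (verit) abs_ge_zero exp_gt_zero mult_nonneg_nonneg)
    moreover have "exp (-2*c*\<phi> z) \<le> exp (-2*c*z)" using c pz by simp
    ultimately show ?thesis by (simp add: mult_left_mono)
  qed
  finally have "c * R (\<phi> z) \<le> c * (W * exp (-2*c*z))" using c by simp
  hence "D' z \<le> 0" unfolding D'_def by simp
  hence "(1 - x) * D' z \<le> 0" using z x by (simp add: mult_nonneg_nonpos)
  hence "D x \<ge> 0" using z(3) R1 unfolding D_def by simp
  hence "R x \<le> W/2 * (exp (-2*c*x) - exp (-2*c))" unfolding D_def by simp
  moreover have "W \<ge> 0" using W x by (smt (verit) abs_ge_zero atLeastAtMost_iff exp_gt_zero mult_nonneg_nonneg)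
  moreover have "W/2 * (exp (-2*c*x) - exp (-2*c)) \<le> W/2 * exp (-2*c*x)"
    using \<open>W \<ge> 0\<close> by (simp add: mult_left_mono)
  ultimately show ?thesis by linarith
qed

lemma real_ode_zero:
  fixes R :: "real \<Rightarrow> real" and c :: real
  assumes c: "c > 0"
    and phi01: "\<forall>x\<in>{0<..<1}. \<phi> x \<le> 1"
    and phix: "\<forall>x\<in>{0<..<1}. \<phi> x > x"
    and cont: "continuous_on {0..1} R"
    and R0: "R 0 = 0"
    and der: "\<And>x. 0 < x \<Longrightarrow> x < 1 \<Longrightarrow> (R has_real_derivative (- c * R (\<phi> x))) (at x)"
  shows "\<forall>x\<in>{0..1}. R x = 0"
proof -
  have a: "R 1 \<le> 0" by (rule real_ode_zero_end[OF c phi01 phix cont R0 der])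
  have derm: "\<And>x. 0 < x \<Longrightarrow> x < 1 \<Longrightarrow> ((\<lambda>x. - R x) has_real_derivative (- c * (- R (\<phi> x)))) (at x)"
    using der by (auto intro!: derivative_eq_intros)
  have contm: "continuous_on {0..1} (\<lambda>x. - R x)" using cont by (intro continuous_intros)
  have "- R 1 \<le> 0" by (rule real_ode_zero_end[OF c phi01 phix contm _ derm]) (simp add: R0)
  with a have R1: "R 1 = 0" by simp
  have "continuous_on {0..1} (\<lambda>x. \<bar>R x\<bar> * exp (2*c*x))" using cont by (intro continuous_intros)
  then obtain x1 where x1: "x1 \<in> {0..1}" "\<forall>y\<in>{0..1}. \<bar>R y\<bar> * exp (2*c*y) \<le> \<bar>R x1\<bar> * exp (2*c*x1)"
    using continuous_attains_sup[OF compact_Icc _ \<open>continuous_on {0..1} (\<lambda>x. \<bar>R x\<bar> * exp (2*c*x))\<close>] by auto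
  define W where "W = \<bar>R x1\<bar> * exp (2*c*x1)"
  have W: "\<forall>y\<in>{0..1}. \<bar>R y\<bar> * exp (2*c*y) \<le> W" using x1 W_def by simp
  have Wm: "\<forall>y\<in>{0..1}. \<bar>- R y\<bar> * exp (2*c*y) \<le> W" using W by simp
  have bnd: "\<bar>R x\<bar> \<le> W/2 * exp (-2*c*x)" if "x \<in> {0..1}" for x
  proof (cases "x = 1")
    case True
    have "W \<ge> 0" unfolding W_def by simp
    thus ?thesis using True R1 by simp
  next
    case False
    hence x: "0 \<le> x" "x < 1" using that by auto
    have "R x \<le> W/2 * exp (-2*c*x)" by (rule one_side[OF c phi01 phix cont R1 der W x])
    moreover have "- R x \<le> W/2 * exp (-2*c*x)" by (rule one_side[OF c phi01 phix contm _ derm Wm x]) (simp add: R1)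
    ultimately show ?thesis by linarith
  qed
  have "W \<le> W/2"
  proof -
    have "W = \<bar>R x1\<bar> * exp (2*c*x1)" by (rule W_def)
    also have "\<dots> \<le> W/2 * exp (-2*c*x1) * exp (2*c*x1)"
      using bnd[OF x1(1)] by (simp add: mult_right_mono)
    also have "\<dots> = W/2" by (simp add: mult.assoc flip: exp_add)
    finally show ?thesis .
  qed
  hence W0: "W \<le> 0" by simp
  show ?thesis
  proof
    fix x assume "x \<in> {0..1::real}"
    hence "\<bar>R x\<bar> * exp (2*c*x) \<le> 0" using W W0 by (meson order_trans)
    moreover have "exp (2*c*x) > 0" by simp
    ultimately show "R x = 0" by (simp add: mult_le_0_iff)
  qed
qed

lemma L2_L1:
  fixes f :: "real \<Rightarrow> complex"
  assumes "f \<in> L2_01"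
  shows "set_integrable lborel {0..1} f"
proof -
  have m: "(\<lambda>x. indicator {0..1} x *\<^sub>R f x) \<in> borel_measurable lborel"
    and s: "integrable lborel (\<lambda>x. indicator {0..1::real} x *\<^sub>R (norm (f x))^2)"
    using assms unfolding L2_01_def set_integrable_def set_borel_measurable_def by auto
  have i1: "integrable lborel (\<lambda>x. indicator {0..1::real} x *\<^sub>R (1::real))"
    by (rule integrable_indicator) auto
  have I: "integrable lborel (\<lambda>x. indicator {0..1::real} x *\<^sub>R (1::real) + indicator {0..1::real} x *\<^sub>R (norm (f x))^2)"
    using i1 s by (rule Bochner_Integration.integrable_add)
  have B: "norm (indicator {0..1} x *\<^sub>R f x) \<le> norm (indicator {0..1::real} x *\<^sub>R (1::real) + indicator {0..1::real} x *\<^sub>R (norm (f x))^2)" for x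
  proof -
    have "0 \<le> (norm (f x) - 1)^2" by simp
    hence "2 * norm (f x) \<le> 1 + (norm (f x))^2" by (simp add: power2_diff)
    hence "norm (f x) \<le> 1 + (norm (f x))^2" using norm_ge_zero[of "f x"] by linarith
    thus ?thesis by (auto split: split_indicator)
  qed
  show ?thesis unfolding set_integrable_def
    by (rule Bochner_Integration.integrable_bound[OF I m]) (rule AE_I2, rule B)
qed


theorem proposition4p1:
  fixes \<phi> :: "real \<Rightarrow> real"
  assumes "\<forall>x\<in>{0..1}. \<phi> x \<in> {0..1}"
    and "mono_on {0..1} \<phi>"
    and "continuous_on {0..1} \<phi>"
    and "\<forall>x\<in>{0<..<1}. \<phi> x > x"
  shows "point_spectrum \<phi> \<inter> {complex_of_real r | r. r < 0} = {}"
proof (rule ccontr)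
  assume "point_spectrum \<phi> \<inter> {complex_of_real r | r. r < 0} \<noteq> {}"
  then obtain \<mu> where mu1: "\<mu> \<in> point_spectrum \<phi>" and mu2: "\<mu> \<in> {complex_of_real r | r. r < 0}"
    by blast
  from mu2 obtain r where r: "r < 0" and mur: "\<mu> = complex_of_real r" by blast
  from mu1 obtain f where f: "f \<in> L2_01"
    and nz: "\<not> (AE x in lborel. x \<in> {0..1} \<longrightarrow> f x = 0)"
    and ev0: "AE x in lborel. x \<in> {0..1} \<longrightarrow> V_op \<phi> f x = \<mu> * f x"
    unfolding point_spectrum_def by blast
  have ev: "AE x in lborel. x \<in> {0..1} \<longrightarrow> V_op \<phi> f x = complex_of_real r * f x"
    using ev0 mur by simp
  have phi: "\<phi> x \<in> {0..1}" if "x \<in> {0..1}" for x using assms(1) that by blast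
  have int01: "set_integrable lborel {0..1} f" using L2_L1[OF f] .
  have intsub: "set_integrable lborel {0..y} f" if "y \<in> {0..1}" for y
    using set_integrable_subset[OF int01] that by auto
  define F where "F y = integral {0..y} f" for y
  have FL: "V_op \<phi> f x = F (\<phi> x)" if "x \<in> {0..1}" for x
    unfolding V_op_def F_def using set_borel_integral_eq_integral(2)[OF intsub[OF phi[OF that]]] .
  have contF: "continuous_on {0..1} F" unfolding F_def
    using indefinite_integral_continuous_1 set_borel_integral_eq_integral(1)[OF int01] by blast
  define g where "g x = F (\<phi> x) / complex_of_real r" for x
  have "continuous_on {0..1} (\<lambda>x. F (\<phi> x))"
    using continuous_on_compose2[OF contF assms(3)] phi by blast
  hence contg: "continuous_on {0..1} g" unfolding g_def
    by (intro continuous_intros) (use r in auto)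
  have fg: "AE x in lborel. x \<in> {0..1} \<longrightarrow> f x = g x"
    using ev
  proof eventually_elim
    case (elim x)
    show ?case
    proof
      assume x: "x \<in> {0..1}"
      have "F (\<phi> x) = complex_of_real r * f x" using elim x FL[OF x] by simp
      moreover have "complex_of_real r \<noteq> 0" using r by simp
      ultimately show "f x = g x" unfolding g_def by (simp add: nonzero_eq_divide_eq mult.commute)
    qed
  qed
  define G where "G u = integral {0..u} g" for u
  have FG: "F y = G y" if "y \<in> {0..1}" for y
  proof -
    have ig: "set_integrable lborel {0..y} g"
    proof (rule borel_integrable_atLeastAtMost')
      show "continuous_on {0..y} g" using contg by (rule continuous_on_subset) (use that in auto)
    qed
    have "(LINT t:{0..y}|lborel. f t) = (LINT t:{0..y}|lborel. g t)"
      unfolding set_lebesgue_integral_def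
    proof (rule integral_cong_AE)
      show "(\<lambda>x. indicator {0..y} x *\<^sub>R f x) \<in> borel_measurable lborel"
        using intsub[OF that] unfolding set_integrable_def by auto
      show "(\<lambda>x. indicator {0..y} x *\<^sub>R g x) \<in> borel_measurable lborel"
        using ig unfolding set_integrable_def by auto
      show "AE x in lborel. indicator {0..y} x *\<^sub>R f x = indicator {0..y} x *\<^sub>R g x"
        using fg
      proof eventually_elim
        case (elim x)
        thus ?case using that by (auto split: split_indicator)
      qed
    qed
    thus ?thesis unfolding F_def G_def
      using set_borel_integral_eq_integral(2)[OF intsub[OF that]] set_borel_integral_eq_integral(2)[OF ig]
      by simp
  qed
  have gG: "g x = G (\<phi> x) / complex_of_real r" if "x \<in> {0..1}" for x
    unfolding g_def using FG phi that by simp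
  have derG: "(G has_vector_derivative g x) (at x)" if "0 < x" "x < 1" for x
  proof -
    have "(G has_vector_derivative g x) (at x within {0..1})"
      unfolding G_def using integral_has_vector_derivative[OF contg] that by auto
    hence "(G has_vector_derivative g x) (at x within {0<..<1})"
      by (rule has_vector_derivative_within_subset) auto
    thus ?thesis using has_vector_derivative_within_open[of x "{0<..<1}"] that by auto
  qed
  have contG: "continuous_on {0..1} G"
    unfolding G_def using indefinite_integral_continuous_1 integrable_continuous_real[OF contg] by blast
  have G0: "G 0 = 0" unfolding G_def by simp
  define c where "c = - 1 / r"
  have c: "c > 0" unfolding c_def using r by simp
  have phi01: "\<forall>x\<in>{0<..<1}. \<phi> x \<le> 1" using phi by auto
  have ReZ: "\<forall>x\<in>{0..1}. Re (G x) = 0"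
  proof (rule real_ode_zero[OF c phi01 assms(4)])
    show "continuous_on {0..1} (\<lambda>x. Re (G x))" using contG by (intro continuous_intros)
    show "Re (G 0) = 0" using G0 by simp
    fix x :: real assume x: "0 < x" "x < 1"
    have "((\<lambda>x. Re (G x)) has_vector_derivative Re (g x)) (at x)"
      using bounded_linear.has_vector_derivative[OF bounded_linear_Re derG[OF x]] .
    moreover have "Re (g x) = - c * Re (G (\<phi> x))"
      using gG[of x] x unfolding c_def by (simp add: Re_divide_of_real)
    ultimately show "((\<lambda>x. Re (G x)) has_real_derivative - c * Re (G (\<phi> x))) (at x)"
      by (simp add: has_real_derivative_iff_has_vector_derivative)
  qed
  have ImZ: "\<forall>x\<in>{0..1}. Im (G x) = 0"
  proof (rule real_ode_zero[OF c phi01 assms(4)])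
    show "continuous_on {0..1} (\<lambda>x. Im (G x))" using contG by (intro continuous_intros)
    show "Im (G 0) = 0" using G0 by simp
    fix x :: real assume x: "0 < x" "x < 1"
    have "((\<lambda>x. Im (G x)) has_vector_derivative Im (g x)) (at x)"
      using bounded_linear.has_vector_derivative[OF bounded_linear_Im derG[OF x]] .
    moreover have "Im (g x) = - c * Im (G (\<phi> x))"
      using gG[of x] x unfolding c_def by (simp add: Im_divide_of_real)
    ultimately show "((\<lambda>x. Im (G x)) has_real_derivative - c * Im (G (\<phi> x))) (at x)"
      by (simp add: has_real_derivative_iff_has_vector_derivative)
  qed
  have "g x = 0" if "x \<in> {0..1}" for x
  proof -
    have "G (\<phi> x) = 0" using ReZ ImZ phi[OF that] by (simp add: complex_eq_iff)
    thus ?thesis using gG[OF that] by simp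
  qed
  hence g0: "\<And>x. x \<in> {0..1} \<Longrightarrow> g x = 0" by blast
  have "AE x in lborel. x \<in> {0..1} \<longrightarrow> f x = 0"
    using fg
  proof eventually_elim
    case (elim x)
    thus ?case using g0 by simp
  qed
  with nz show False by blast
qed

end
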